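(* Let $N\ge1$ and $W(x,y)=W_N(x,y)=1+\sum_{n=1}^N\frac{P_{n-1}(y)}{x^n}$, regarded as a function of two real variables, with partial derivatives $W_x,W_y$. Then for every real $x\ge x_N$, with $y=\log x$, there exists $\theta$ with $|\theta|\le1$ such that \[ W+xW+xW_x+W_y-x-y-\log W=\theta\, r_{N+1}\frac{y^N}{x^N}, \] where $W,W_x,W_y$ are evaluated at $(x,\log x)$ and $r_{N+1}=3\cdot(N+1)!$.
   Context: The polynomials $P_n(y)$ are defined by $P_0(y)=y-1$ and, for $n\ge1$, $P_n=nP_{n-1}-P'_{n-1}+\frac{1}{n}\sum_{k=1}^{n-1}k\{(k-1)P_{k-1}-P_k-P'_{k-1}\}P_{n-k-1}$. The integers $a_n$ are defined by $a_1=1$, $a_n=n\cdot n!+\sum_{k=1}^{n-1}k!\,a_{n-k}$. Let $c_N>0$ be a constant such that $x\bigl(1-\sum_{n=1}^N\frac{n!}{x^n}\bigr)\ge1$ for all real $x\ge c_N$, and let $d_N>0$ be a constant such that for every complex $x$ with $|x|\ge d_N$ one has $\log(1-\sum_{n=1}^N n!x^{-n})^{-1}=\sum_{n=1}^N\frac{a_n}{n}x^{-n}+\theta\frac{a_{N+1}}{N+1}x^{-N-1}$ for some $|\theta|\le1$ (principal logarithm). Let $\alpha_N=\max(e,c_N,d_N)$, let $\beta_N\ge e$ be the solution of $\frac{x}{\log x}=\alpha_N$, and $x_N=\max(\beta_N,\,4(N+1)/3,\,e^2)$. *)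

theory Defs
  imports "HOL-Analysis.Analysis" "HOL-Computational_Algebra.Polynomial"
begin

function Ppoly :: "nat \<Rightarrow> real poly" where
  "Ppoly 0 = [:-1, 1:]"
| "Ppoly (Suc m) =
     smult (real (Suc m)) (Ppoly m) - pderiv (Ppoly m)
     + smult (1 / real (Suc m))
         (\<Sum>k\<in>{1..m}. smult (real k)
             (smult (real k - 1) (Ppoly (k - 1)) - Ppoly k - pderiv (Ppoly (k - 1)))
           * Ppoly (m - k))"
  by pat_completeness auto
termination
  by (relation "Wellfounded.measure id") auto

text \<open>The integers a_n (a_0 = 0 is an unused dummy; a_1 = 1).\<close>
function aseq :: "nat \<Rightarrow> nat" where
  "aseq 0 = 0"
| "aseq (Suc m) = Suc m * fact (Suc m) + (\<Sum>k\<in>{1..m}. fact k * aseq (Suc m - k))"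
  by pat_completeness auto
termination
  by (relation "Wellfounded.measure id") auto

definition W :: "nat \<Rightarrow> real \<Rightarrow> real \<Rightarrow> real" where
  "W N x y = 1 + (\<Sum>n\<in>{1..N}. poly (Ppoly (n - 1)) y / x ^ n)"

definition c_prop :: "nat \<Rightarrow> real \<Rightarrow> bool" where
  "c_prop N c \<longleftrightarrow> c > 0 \<and>
     (\<forall>x::real. x \<ge> c \<longrightarrow> x * (1 - (\<Sum>n\<in>{1..N}. fact n / x ^ n)) \<ge> 1)"

definition d_prop :: "nat \<Rightarrow> real \<Rightarrow> bool" where
  "d_prop N d \<longleftrightarrow> d > 0 \<and>
     (\<forall>z::complex. norm z \<ge> d \<longrightarrow>
        (\<exists>\<theta>::complex. norm \<theta> \<le> 1 \<and>
           Ln (inverse (1 - (\<Sum>n\<in>{1..N}. fact n / z ^ n)))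
           = (\<Sum>n\<in>{1..N}. of_nat (aseq n) / of_nat n / z ^ n)
             + \<theta> * of_nat (aseq (N + 1)) / of_nat (N + 1) / z ^ (N + 1)))"

end

theory Submission
  imports Defs "HOL-Computational_Algebra.Formal_Power_Series" "HOL-Computational_Algebra.Polynomial_FPS"
begin


definition maj :: "real poly \<Rightarrow> real poly \<Rightarrow> bool" where
  "maj p q \<longleftrightarrow> (\<forall>j. \<bar>coeff p j\<bar> \<le> coeff q j)"

lemma maj_nonneg: "maj p P \<Longrightarrow> coeff P j \<ge> 0"
  unfolding maj_def by (meson abs_ge_zero order_trans)

lemma maj_add: "maj p P \<Longrightarrow> maj q Q \<Longrightarrow> maj (p + q) (P + Q)"
  unfolding maj_def by (auto simp: coeff_add intro: order_trans[OF abs_triangle_ineq] add_mono)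

lemma maj_diff: "maj p P \<Longrightarrow> maj q Q \<Longrightarrow> maj (p - q) (P + Q)"
  unfolding maj_def by (auto simp: coeff_diff coeff_add intro: order_trans[OF abs_triangle_ineq4] add_mono)

lemma maj_smult: "c \<ge> 0 \<Longrightarrow> maj p P \<Longrightarrow> maj (smult c p) (smult c P)"
  unfolding maj_def by (auto simp: abs_mult intro: mult_left_mono)

lemma maj_pderiv: "maj p P \<Longrightarrow> maj (pderiv p) (pderiv P)"
  unfolding maj_def by (auto simp: coeff_pderiv abs_mult intro: mult_left_mono)

lemma maj_mult: assumes "maj p P" "maj q Q" shows "maj (p * q) (P * Q)"
  unfolding maj_def
proof
  fix n
  have "\<bar>coeff (p * q) n\<bar> \<le> (\<Sum>i\<le>n. \<bar>coeff p i * coeff q (n - i)\<bar>)"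
    unfolding coeff_mult by (rule sum_abs)
  also have "\<dots> \<le> (\<Sum>i\<le>n. coeff P i * coeff Q (n - i))"
    using assms unfolding maj_def
    by (intro sum_mono) (auto simp: abs_mult intro: mult_mono maj_nonneg[OF assms(1)])
  finally show "\<bar>coeff (p * q) n\<bar> \<le> coeff (P * Q) n" by (simp add: coeff_mult)
qed

lemma maj_zero: "maj 0 0" by (simp add: maj_def)

lemma maj_sum: "(\<And>k. k \<in> A \<Longrightarrow> maj (f k) (g k)) \<Longrightarrow> maj (sum f A) (sum g A)"
proof (induction A rule: infinite_finite_induct)
  case (infinite A) then show ?case by (simp add: maj_zero)
next
  case empty then show ?case by (simp add: maj_zero)
next
  case (insert x F) then show ?case by (simp add: maj_add)
qed

lemma maj_power: assumes "maj p P" shows "maj (p ^ k) (P ^ k)"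
proof (induction k)
  case 0 show ?case by (auto simp: maj_def coeff_1)
next
  case (Suc k) show ?case using maj_mult[OF assms Suc] by simp
qed

lemma poly_sum_D: fixes p :: "real poly" assumes "degree p \<le> D" shows "poly p x = (\<Sum>i\<le>D. coeff p i * x ^ i)"
proof -
  have "poly p x = (\<Sum>i\<le>degree p. coeff p i * x ^ i)" by (rule poly_altdef)
  also have "\<dots> = (\<Sum>i\<le>D. coeff p i * x ^ i)"
    by (rule sum.mono_neutral_left) (use assms in \<open>auto simp: coeff_eq_0\<close>)
  finally show ?thesis .
qed

lemma maj_poly: assumes "maj p P" "(y::real) \<ge> 0" shows "\<bar>poly p y\<bar> \<le> poly P y"
proof -
  define D where "D = max (degree p) (degree P)"
  have "\<bar>poly p y\<bar> = \<bar>\<Sum>i\<le>D. coeff p i * y ^ i\<bar>" by (subst poly_sum_D[of p D]) (auto simp: D_def)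
  also have "\<dots> \<le> (\<Sum>i\<le>D. \<bar>coeff p i * y ^ i\<bar>)" by (rule sum_abs)
  also have "\<dots> \<le> (\<Sum>i\<le>D. coeff P i * y ^ i)"
    using assms unfolding maj_def by (intro sum_mono) (auto simp: abs_mult intro: mult_right_mono)
  also have "\<dots> = poly P y" by (subst poly_sum_D[of P D]) (auto simp: D_def)
  finally show ?thesis .
qed

function Rpoly :: "nat \<Rightarrow> real poly" where
  "Rpoly 0 = [:1, 1:]"
| "Rpoly (Suc m) =
     smult (real (Suc m)) (Rpoly m) + pderiv (Rpoly m)
     + smult (1 / real (Suc m))
         (\<Sum>k\<in>{1..m}. smult (real k)
             (smult (real k - 1) (Rpoly (k - 1)) + Rpoly k + pderiv (Rpoly (k - 1)))
           * Rpoly (m - k))"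
  by pat_completeness auto
termination
  by (relation "Wellfounded.measure id") auto

lemma maj_PR: "maj (Ppoly n) (Rpoly n)"
proof (induction n rule: less_induct)
  case (less n)
  show ?case
  proof (cases n)
    case 0
    then show ?thesis by (auto simp: maj_def coeff_pCons split: nat.split)
  next
    case (Suc m)
    have IH: "\<And>k. k \<le> m \<Longrightarrow> maj (Ppoly k) (Rpoly k)" using less Suc by auto
    have S: "maj (\<Sum>k\<in>{1..m}. smult (real k)
             (smult (real k - 1) (Ppoly (k - 1)) - Ppoly k - pderiv (Ppoly (k - 1)))
           * Ppoly (m - k))
        (\<Sum>k\<in>{1..m}. smult (real k)
             (smult (real k - 1) (Rpoly (k - 1)) + Rpoly k + pderiv (Rpoly (k - 1)))
           * Rpoly (m - k))"
      by (intro maj_sum maj_mult maj_smult maj_diff maj_pderiv IH) auto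
    show ?thesis unfolding Suc Ppoly.simps Rpoly.simps
      by (intro maj_add maj_diff maj_smult maj_pderiv S less) (auto simp: Suc)
  qed
qed

lemma degree_Rpoly: "degree (Rpoly n) \<le> (if n = 0 then 1 else n)"
proof (induction n rule: less_induct)
  case (less n)
  show ?case
  proof (cases n)
    case 0
    then show ?thesis by simp
  next
    case (Suc m)
    have IH: "\<And>k. k \<le> m \<Longrightarrow> degree (Rpoly k) \<le> (if k = 0 then 1 else k)" using less Suc by auto
    have T: "degree (smult (real k) (smult (real k - 1) (Rpoly (k - 1)) + Rpoly k + pderiv (Rpoly (k - 1)))
           * Rpoly (m - k)) \<le> Suc m" if k: "k \<in> {1..m}" for k
    proof -
      have c00: "degree (Rpoly (k - 1)) \<le> (if k - 1 = 0 then 1 else k - 1)"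
        using IH[of "k-1"] k by auto
      have c0: "degree (Rpoly (k - 1)) \<le> k"
        using c00 k by (auto split: if_splits)
      have a: "degree (smult (real k - 1) (Rpoly (k - 1))) \<le> k"
        by (rule order_trans[OF degree_smult_le c0])
      have b: "degree (Rpoly k) \<le> k" using IH[of k] k by auto
      have c: "degree (pderiv (Rpoly (k - 1))) \<le> k"
        using c0 by (simp add: degree_pderiv)
      have abc: "degree (smult (real k) (smult (real k - 1) (Rpoly (k - 1)) + Rpoly k + pderiv (Rpoly (k - 1)))) \<le> k"
        by (intro order_trans[OF degree_smult_le] degree_add_le a b c)
      have d: "degree (Rpoly (m - k)) \<le> Suc m - k" using IH[of "m-k"] k by (auto split: if_splits)
      show ?thesis using k by (intro order_trans[OF degree_mult_le]) (use abc d in auto)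
    qed
    have "degree (Rpoly (Suc m)) \<le> Suc m"
      unfolding Rpoly.simps
      apply (intro degree_add_le order_trans[OF degree_smult_le] degree_sum_le T)
      using IH[of m] by (auto simp: degree_pderiv split: if_splits)
    then show ?thesis using Suc by simp
  qed
qed

lemma Rpoly_nonneg: "coeff (Rpoly n) j \<ge> 0"
  using maj_PR maj_nonneg by blast

lemma nonneg_poly_scale:
  fixes Q :: "real poly"
  assumes "\<And>j. coeff Q j \<ge> 0" "degree Q \<le> d" "0 < a" "a \<le> y"
  shows "poly Q y \<le> (y / a) ^ d * poly Q a"
  using assms
proof (induction Q arbitrary: d rule: pCons_induct)
  case 0 then show ?case by simp
next
  case (pCons c p)
  have c0: "c \<ge> 0" using pCons.prems(1)[of 0] by simp
  have pn: "\<And>j. coeff p j \<ge> 0" using pCons.prems(1)[of "Suc _"] by simp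
  have ya: "y / a \<ge> 1" using pCons.prems by simp
  have ge1: "(y / a) ^ d \<ge> 1" using ya by (rule one_le_power)
  have cle: "c \<le> (y/a)^d * c" using mult_right_mono[OF ge1 c0] by simp
  show ?case
  proof (cases "p = 0")
    case True
    then show ?thesis using cle by simp
  next
    case False
    then have dp: "degree p \<le> d - 1" "d \<ge> 1" using pCons.prems(2) by auto
    have IH: "poly p y \<le> (y/a)^(d-1) * poly p a" using pCons.IH[OF pn dp(1)] pCons.prems by auto
    have y0: "y \<ge> 0" using pCons.prems by simp
    have "poly (pCons c p) y = c + y * poly p y" by simp
    also have "\<dots> \<le> c + y * ((y/a)^(d-1) * poly p a)" using IH y0 by (intro add_left_mono mult_left_mono) auto
    also have "y * ((y/a)^(d-1) * poly p a) = (y/a)^d * (a * poly p a)"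
    proof -
      have "(y/a)^d = (y/a) * (y/a)^(d-1)" using dp(2) by (cases d) auto
      then show ?thesis using pCons.prems(3) by (simp add: field_simps)
    qed
    also have "c + (y/a)^d * (a * poly p a) \<le> (y/a)^d * c + (y/a)^d * (a * poly p a)"
      using cle by simp
    also have "\<dots> = (y/a)^d * poly (pCons c p) a" by (simp add: algebra_simps)
    finally show ?thesis .
  qed
qed

lemma nonneg_pderiv_bound:
  fixes Q :: "real poly"
  assumes "\<And>j. coeff Q j \<ge> 0" "degree Q \<le> d" "0 < a"
  shows "a * poly (pderiv Q) a \<le> real d * poly Q a"
  using assms
proof (induction Q arbitrary: d rule: pCons_induct)
  case 0 then show ?case by simp
next
  case (pCons c p)
  have c0: "c \<ge> 0" using pCons.prems(1)[of 0] by simp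
  have pn: "\<And>j. coeff p j \<ge> 0" using pCons.prems(1)[of "Suc _"] by simp
  have pa: "poly p a \<ge> 0" using pn pCons.prems(3)
    by (simp add: poly_altdef sum_nonneg)
  show ?case
  proof (cases "p = 0")
    case True
    then show ?thesis using c0 pCons.prems by (simp add: pderiv_pCons)
  next
    case False
    then have dp: "degree p \<le> d - 1" "d \<ge> 1" using pCons.prems(2) by auto
    have IH: "a * poly (pderiv p) a \<le> real (d-1) * poly p a" using pCons.IH[OF pn dp(1)] pCons.prems by auto
    have "a * poly (pderiv (pCons c p)) a = a * poly p a + a * (a * poly (pderiv p) a)"
      by (simp add: pderiv_pCons algebra_simps)
    also have "\<dots> \<le> a * poly p a + a * (real (d-1) * poly p a)"
      using IH pCons.prems by (intro add_left_mono mult_left_mono) auto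
    also have "\<dots> = real d * (a * poly p a)" using dp(2) by (simp add: of_nat_diff algebra_simps)
    also have "\<dots> \<le> real d * poly (pCons c p) a" using c0 by (simp, intro mult_left_mono) auto
    finally show ?thesis .
  qed
qed


definition Gb :: "nat \<Rightarrow> real" where
  "Gb m = (if m = 0 then 3 else 9/8 * fact (m+1) * 2^m)"
definition Db :: "nat \<Rightarrow> real" where
  "Db m = (if m = 0 then 1 else real m / 2 * Gb m)"
definition Tb :: "nat \<Rightarrow> nat \<Rightarrow> real" where
  "Tb m k = real k * ((real k - 1) * Gb (k - 1) + Gb k + Db (k - 1)) * Gb (m - k)"
definition RHSb :: "nat \<Rightarrow> real" where
  "RHSb m = real (Suc m) * Gb m + Db m + 1 / real (Suc m) * (\<Sum>k\<in>{1..m}. Tb m k)"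

lemma RHSb_small: assumes "m \<le> 12" shows "RHSb m \<le> Gb (Suc m)"
proof -
  have "m = 0 \<or> m = 1 \<or> m = 2 \<or> m = 3 \<or> m = 4 \<or> m = 5 \<or> m = 6 \<or> m = 7 \<or> m = 8 \<or> m = 9
    \<or> m = 10 \<or> m = 11 \<or> m = 12" using assms by presburger
  then show ?thesis
    by (elim disjE) (simp_all add: RHSb_def Tb_def Gb_def Db_def numeral_eq_Suc atLeastAtMostSuc_conv)
qed

lemma fact_mult_le2:
  fixes a b :: nat assumes "2 \<le> a" "2 \<le> b"
  shows "fact a * fact b \<le> (2::real) * fact (a + b - 2)"
  using assms(1)
proof (induction a rule: dec_induct)
  case base then show ?case by (simp add: numeral_eq_Suc)
next
  case (step a)
  have e: "a + b - 1 = Suc (a + b - 2)" "Suc a + b - 2 = a + b - 1" using step assms by auto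
  have "fact (Suc a) * fact b = real (Suc a) * (fact a * fact b)" by simp
  also have "\<dots> \<le> real (Suc a) * (2 * fact (a + b - 2))"
    using step.IH by (intro mult_left_mono) auto
  also have "\<dots> \<le> real (a + b - 1) * (2 * fact (a + b - 2))"
    using assms by (intro mult_right_mono) auto
  also have "\<dots> = 2 * fact (Suc a + b - 2)"
    unfolding e(2) by (subst (2) e(1)) (simp only: fact_Suc, simp add: e(1)[symmetric])
  finally show ?case .
qed

lemma Gb_pos: "Gb m > 0" by (simp add: Gb_def)

lemma Gb_pos': "m \<ge> 1 \<Longrightarrow> Gb m = 9/8 * fact (m+1) * 2^m" by (simp add: Gb_def)

lemma inner_le: assumes "k \<ge> 2"
  shows "(real k - 1) * Gb (k - 1) + Gb k + Db (k - 1) \<le> 7/4 * Gb k"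
proof -
  have k1: "k - 1 \<ge> 1" "k \<ge> 1" using assms by auto
  have Dk: "Db (k - 1) = (real k - 1) / 2 * Gb (k - 1)" using k1 assms by (simp add: Db_def of_nat_diff)
  have fk: "fact (k+1) = real (k+1) * fact k" by simp
  have pk: "(2::real)^k = 2 * 2^(k-1)" using k1 by (cases k) auto
  have "(real k - 1) * Gb (k - 1) \<le> 1/2 * Gb k"
  proof -
    have "(real k - 1) * Gb (k - 1) = (real k - 1) * (9/8 * fact k * 2^(k-1))"
      using k1 by (simp add: Gb_def)
    also have "\<dots> \<le> real (k+1) * (9/8 * fact k * 2^(k-1))"
      by (intro mult_right_mono) auto
    also have "\<dots> = 1/2 * Gb k" using k1 by (simp add: Gb_def fk pk)
    finally show ?thesis .
  qed
  then show ?thesis unfolding Dk using Gb_pos[of k] by (simp add: field_simps)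
qed

lemma Tb_mid: assumes "2 \<le> k" "k \<le> m - 1"
  shows "Tb m k \<le> 63/16 * Gb m"
proof -
  have m1: "m - k \<ge> 1" "m \<ge> 3" using assms by auto
  have "Tb m k \<le> real k * (7/4 * Gb k) * Gb (m - k)"
    unfolding Tb_def using inner_le[OF assms(1)] Gb_pos[of "m-k"]
    by (intro mult_right_mono mult_left_mono) auto
  also have "\<dots> = real k * (7/4) * (81/64) * (fact (k+1) * fact (m - k + 1)) * 2^m"
  proof -
    have e: "(2::real)^m = 2^k * 2^(m-k)" using assms by (simp add: power_add[symmetric])
    have k1: "k \<ge> 1" using assms by simp
    show ?thesis unfolding Gb_pos'[OF k1] Gb_pos'[OF m1(1)] e
      by (simp add: algebra_simps del: fact_Suc)
  qed
  also have "\<dots> \<le> real m * (7/4) * (81/64) * (2 * fact m) * 2^m"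
  proof -
    have "fact (k+1) * fact (m - k + 1) \<le> (2::real) * fact (k + 1 + (m - k + 1) - 2)"
      by (rule fact_mult_le2) (use assms m1 in auto)
    also have "k + 1 + (m - k + 1) - 2 = m" using assms by auto
    finally have f: "fact (k+1) * fact (m - k + 1) \<le> (2::real) * fact m" .
    have h1: "real k * (7/4) * (81/64) * (fact (k+1) * fact (m - k + 1)) \<le> real m * (7/4) * (81/64) * (2 * fact m)"
      by (rule mult_mono[OF _ f]) (use assms in auto)
    show ?thesis by (rule mult_right_mono[OF h1]) simp
  qed
  also have "\<dots> = 63/16 * (9/8 * (real m * fact m) * 2^m)" by simp
  also have "\<dots> \<le> 63/16 * (9/8 * fact (m+1) * 2^m)" by (intro mult_left_mono mult_right_mono) auto
  also have "\<dots> = 63/16 * Gb m" using m1 by (simp add: Gb_def)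
  finally show ?thesis .
qed

lemma RHSb_large: assumes "m \<ge> 13" shows "RHSb m \<le> Gb (Suc m)"
proof -
  define G where "G = Gb m"
  have G0: "G > 0" using Gb_pos by (simp add: G_def)
  have GS: "Gb (Suc m) = 2 * (real m + 2) * G"
  proof -
    have "fact (Suc m + 1) = real (m+2) * (fact (m + 1) :: real)" by simp
    then show ?thesis using assms by (simp add: G_def Gb_def algebra_simps)
  qed
  have Gm1: "G = 2 * (real m + 1) * Gb (m - 1)"
  proof -
    have "fact (m + 1) = real (m+1) * (fact m :: real)" by simp
    moreover have "(2::real)^m = 2 * 2^(m-1)" using assms by (cases m) auto
    ultimately show ?thesis using assms by (simp add: G_def Gb_def algebra_simps)
  qed
  have T1: "Tb m 1 \<le> 3 * G"
  proof -
    have "Tb m 1 = 11/2 * Gb (m - 1)" by (simp add: Tb_def Gb_def Db_def)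
    also have "\<dots> \<le> 3 * G" unfolding Gm1 using Gb_pos[of "m-1"] by (simp add: field_simps)
    finally show ?thesis .
  qed
  have Tm: "Tb m m \<le> 21/4 * (real m + 1) * G"
  proof -
    have "Tb m m = real m * ((real m - 1) * Gb (m - 1) + Gb m + Db (m - 1)) * 3"
      by (simp add: Tb_def Gb_def)
    also have "\<dots> \<le> real m * (7/4 * G) * 3"
      using inner_le[of m] assms by (intro mult_right_mono mult_left_mono) (auto simp: G_def)
    also have "\<dots> \<le> 21/4 * (real m + 1) * G" using G0 by (simp add: field_simps)
    finally show ?thesis .
  qed
  have TM: "(\<Sum>k\<in>{2..m-1}. Tb m k) \<le> (real m - 2) * (63/16 * G)"
  proof -
    have "(\<Sum>k\<in>{2..m-1}. Tb m k) \<le> of_nat (card {2..m-1}) * (63/16 * G)"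
      by (rule sum_bounded_above) (use Tb_mid in \<open>auto simp: G_def\<close>)
    also have "card {2..m-1} = m - 2" using assms by simp
    finally show ?thesis using assms by (simp add: of_nat_diff)
  qed
  have split: "(\<Sum>k\<in>{1..m}. Tb m k) = Tb m 1 + (\<Sum>k\<in>{2..m-1}. Tb m k) + Tb m m"
  proof -
    obtain m' where m': "m = Suc m'" using assms by (cases m) auto
    have "(\<Sum>k\<in>{1..m}. Tb m k) = Tb m 1 + (\<Sum>k\<in>{Suc 1..m}. Tb m k)"
      using assms by (intro sum.atLeast_Suc_atMost) auto
    also have "(\<Sum>k\<in>{Suc 1..m}. Tb m k) = (\<Sum>k\<in>{2..m-1}. Tb m k) + Tb m m"
      using assms unfolding m' by (subst sum.cl_ivl_Suc) (auto simp: numeral_2_eq_2)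
    finally show ?thesis by simp
  qed
  have S0: "(\<Sum>k\<in>{1..m}. Tb m k) \<le> 3 * G + (real m - 2) * (63/16 * G) + 21/4 * (real m + 1) * G"
    unfolding split using T1 Tm TM by linarith
  have "(3 + (real m - 2) * (63/16) + 21/4 * (real m + 1)) * G = 3 * G + (real m - 2) * (63/16 * G) + 21/4 * (real m + 1) * G"
    by (simp add: algebra_simps)
  then have S: "(\<Sum>k\<in>{1..m}. Tb m k) \<le> (3 + (real m - 2) * (63/16) + 21/4 * (real m + 1)) * G"
    using S0 by linarith
  have poly_ineq: "3 + (real m - 2) * (63/16) + 21/4 * (real m + 1) \<le> (real m / 2 + 3) * (real m + 1)"
  proof -
    have "real m * real m \<ge> 13 * real m" using assms by (intro mult_right_mono) auto
    moreover have "(real m / 2 + 3) * (real m + 1) = real m * real m / 2 + 7/2 * real m + 3"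
      by (simp add: field_simps)
    moreover have "3 + (real m - 2) * (63/16) + 21/4 * (real m + 1) = 147/16 * real m + 3/8"
      by (simp add: field_simps)
    ultimately show ?thesis by linarith
  qed
  have "1 / real (Suc m) * (\<Sum>k\<in>{1..m}. Tb m k) \<le> (real m / 2 + 3) * G"
  proof -
    have "(\<Sum>k\<in>{1..m}. Tb m k) \<le> (real m / 2 + 3) * (real m + 1) * G"
      using S poly_ineq G0 by (meson order_trans mult_right_mono less_imp_le)
    then show ?thesis by (simp add: field_simps)
  qed
  moreover have "Db m = real m / 2 * G" using assms by (simp add: Db_def G_def)
  ultimately have "RHSb m \<le> real (Suc m) * G + real m / 2 * G + (real m / 2 + 3) * G"
    unfolding RHSb_def G_def by simp
  also have "\<dots> = Gb (Suc m)" unfolding GS by (simp add: algebra_simps)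
  finally show ?thesis .
qed

lemma RHSb_le: "RHSb m \<le> Gb (Suc m)"
  using RHSb_small RHSb_large by (cases "m \<le> 12") auto


lemma nonneg_poly_val: fixes Q :: "real poly"
  assumes "\<And>j. coeff Q j \<ge> 0" "x \<ge> 0" shows "poly Q x \<ge> 0"
  using assms by (simp add: poly_altdef sum_nonneg)

lemma Rpoly_val_nonneg: "(x::real) \<ge> 0 \<Longrightarrow> poly (Rpoly n) x \<ge> 0"
  by (rule nonneg_poly_val[OF Rpoly_nonneg])

lemma Rpoly_dval_nonneg: "(x::real) \<ge> 0 \<Longrightarrow> poly (pderiv (Rpoly n)) x \<ge> 0"
  by (rule nonneg_poly_val) (auto simp: coeff_pderiv intro!: mult_nonneg_nonneg Rpoly_nonneg)

lemma h_le_from_g: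
  assumes "poly (Rpoly n) 2 \<le> Gb n"
  shows "poly (pderiv (Rpoly n)) 2 \<le> Db n"
proof (cases "n = 0")
  case True then show ?thesis by (simp add: Db_def pderiv_pCons)
next
  case False
  have "2 * poly (pderiv (Rpoly n)) 2 \<le> real n * poly (Rpoly n) 2"
    using nonneg_pderiv_bound[OF Rpoly_nonneg, of n n 2] degree_Rpoly[of n] False by auto
  also have "\<dots> \<le> real n * Gb n" using assms by (intro mult_left_mono) auto
  finally show ?thesis using False by (simp add: Db_def)
qed

lemma g_le: "poly (Rpoly n) 2 \<le> Gb n"
proof (induction n rule: less_induct)
  case (less n)
  show ?case
  proof (cases n)
    case 0 then show ?thesis by (simp add: Gb_def)
  next
    case (Suc m)
    have IHg: "\<And>k. k \<le> m \<Longrightarrow> poly (Rpoly k) 2 \<le> Gb k" using less Suc by auto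
    have IHh: "\<And>k. k \<le> m \<Longrightarrow> poly (pderiv (Rpoly k)) 2 \<le> Db k" using IHg h_le_from_g by blast
    define g where "g k = poly (Rpoly k) 2" for k
    define h where "h k = poly (pderiv (Rpoly k)) 2" for k
    have g0: "g k \<ge> 0" for k unfolding g_def by (rule Rpoly_val_nonneg) simp
    have h0: "h k \<ge> 0" for k unfolding h_def by (rule Rpoly_dval_nonneg) simp
    have "poly (Rpoly (Suc m)) 2 = real (Suc m) * g m + h m + 1 / real (Suc m) *
       (\<Sum>k\<in>{1..m}. real k * ((real k - 1) * g (k - 1) + g k + h (k - 1)) * g (m - k))"
      by (simp add: g_def h_def poly_sum mult.assoc)
    also have "\<dots> \<le> RHSb m"
    proof -
      have t: "real k * ((real k - 1) * g (k - 1) + g k + h (k - 1)) * g (m - k)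
         \<le> real k * ((real k - 1) * Gb (k - 1) + Gb k + Db (k - 1)) * Gb (m - k)" if k: "k \<in> {1..m}" for k
      proof -
        have kk: "real k - 1 \<ge> 0" using k by auto
        have a: "(real k - 1) * g (k - 1) + g k + h (k - 1) \<le> (real k - 1) * Gb (k - 1) + Gb k + Db (k - 1)"
          using k IHg[of "k-1"] IHg[of k] IHh[of "k-1"] kk
          by (intro add_mono mult_left_mono) (auto simp: g_def h_def)
        have b: "0 \<le> (real k - 1) * g (k - 1) + g k + h (k - 1)" using kk g0 h0 by simp
        have c: "real k * ((real k - 1) * g (k - 1) + g k + h (k - 1)) \<le> real k * ((real k - 1) * Gb (k - 1) + Gb k + Db (k - 1))"
          using a by (intro mult_left_mono) auto
        show ?thesis using c b g0[of "m-k"] IHg[of "m-k"] k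
          by (intro mult_mono) (auto simp: g_def)
      qed
      have s: "(\<Sum>k\<in>{1..m}. real k * ((real k - 1) * g (k - 1) + g k + h (k - 1)) * g (m - k))
          \<le> (\<Sum>k\<in>{1..m}. Tb m k)" unfolding Tb_def by (rule sum_mono) (rule t)
      have s2: "1 / real (Suc m) * (\<Sum>k\<in>{1..m}. real k * ((real k - 1) * g (k - 1) + g k + h (k - 1)) * g (m - k))
          \<le> 1 / real (Suc m) * (\<Sum>k\<in>{1..m}. Tb m k)" by (rule mult_left_mono[OF s]) simp
      have s3: "real (Suc m) * g m \<le> real (Suc m) * Gb m" using IHg[of m] by (intro mult_left_mono) (auto simp: g_def)
      have s4: "h m \<le> Db m" using IHh[of m] by (simp add: h_def)
      show ?thesis unfolding RHSb_def using s2 s3 s4 by linarith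
    qed
    also have "\<dots> \<le> Gb (Suc m)" by (rule RHSb_le)
    finally show ?thesis using Suc by simp
  qed
qed

lemma P_bound:
  assumes "n \<ge> 1" "(y::real) \<ge> 2"
  shows "\<bar>poly (Ppoly n) y\<bar> \<le> 9/8 * fact (n+1) * y ^ n"
proof -
  have "\<bar>poly (Ppoly n) y\<bar> \<le> poly (Rpoly n) y" using maj_poly[OF maj_PR] assms by simp
  also have "\<dots> \<le> (y / 2) ^ n * poly (Rpoly n) 2"
    using nonneg_poly_scale[OF Rpoly_nonneg, of n n 2 y] degree_Rpoly[of n] assms by auto
  also have "\<dots> \<le> (y / 2) ^ n * Gb n"
    using g_le assms by (intro mult_left_mono) auto
  also have "\<dots> = 9/8 * fact (n+1) * y ^ n"
    using assms by (simp add: Gb_def power_divide)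
  finally show ?thesis .
qed

lemma P_bound_maj:
  assumes "n \<ge> 1" "(y::real) \<ge> 2"
  shows "\<bar>poly (Ppoly (n - 1)) y\<bar> \<le> fact n * y ^ n"
proof (cases "n = 1")
  case True then show ?thesis using assms by simp
next
  case False
  then have n2: "n - 1 \<ge> 1" using assms by auto
  have "\<bar>poly (Ppoly (n - 1)) y\<bar> \<le> 9/8 * fact (n - 1 + 1) * y ^ (n - 1)" by (rule P_bound[OF n2 assms(2)])
  also have "\<dots> = 9/8 * fact n * y ^ (n - 1)" using assms by simp
  also have "\<dots> \<le> y * fact n * y ^ (n - 1)" using assms by (intro mult_right_mono) auto
  also have "\<dots> = fact n * y ^ n" using assms by (cases n) auto
  finally show ?thesis .
qed


lemma aseq_small: "n \<le> 4 \<Longrightarrow> real (aseq n) \<le> 3 * real n * fact n"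
proof -
  assume "n \<le> 4"
  then have "n = 0 \<or> n = 1 \<or> n = 2 \<or> n = 3 \<or> n = 4" by presburger
  then show ?thesis
    by (elim disjE) (simp_all add: numeral_eq_Suc atLeastAtMostSuc_conv)
qed

lemma fact_sum_bound:
  assumes "m \<ge> 4"
  shows "(\<Sum>k\<in>{1..m}. fact k * fact (m + 2 - k)) \<le> (3::real) * fact (m + 1)"
proof -
  obtain m' where m': "m = Suc m'" using assms by (cases m) auto
  have split: "(\<Sum>k\<in>{1..m}. fact k * fact (m + 2 - k) :: real) =
      fact 1 * fact (m + 1) + (\<Sum>k\<in>{2..m-1}. fact k * fact (m + 2 - k)) + fact m * fact 2"
  proof -
    have "(\<Sum>k\<in>{1..m}. fact k * fact (m + 2 - k) :: real) = fact 1 * fact (m + 1) + (\<Sum>k\<in>{Suc 1..m}. fact k * fact (m + 2 - k))"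
      using assms by (subst sum.atLeast_Suc_atMost) auto
    also have "(\<Sum>k\<in>{Suc 1..m}. fact k * fact (m + 2 - k) :: real) = (\<Sum>k\<in>{2..m-1}. fact k * fact (m + 2 - k)) + fact m * fact 2"
      using assms unfolding m' by (subst sum.cl_ivl_Suc) (auto simp: numeral_2_eq_2)
    finally show ?thesis by simp
  qed
  have mid: "(\<Sum>k\<in>{2..m-1}. fact k * fact (m + 2 - k) :: real) \<le> of_nat (card {2..m-1}) * (2 * fact m)"
  proof (rule sum_bounded_above)
    fix k assume k: "k \<in> {2..m-1}"
    have "fact k * fact (m + 2 - k) \<le> (2::real) * fact (k + (m + 2 - k) - 2)"
      by (rule fact_mult_le2) (use k in auto)
    also have "k + (m + 2 - k) - 2 = m" using k by auto
    finally show "fact k * fact (m + 2 - k) \<le> (2::real) * fact m" .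
  qed
  have c: "card {2..m-1} = m - 2" using assms by simp
  have "(\<Sum>k\<in>{1..m}. fact k * fact (m + 2 - k)) \<le> fact (m + 1) + (real m - 2) * (2 * fact m) + 2 * fact m"
    unfolding split using mid c assms by (simp add: of_nat_diff)
  also have "\<dots> = fact (m+1) + 2 * (real m - 1) * fact m" by (simp add: algebra_simps)
  also have "\<dots> \<le> fact (m+1) + 2 * real (m + 1) * fact m"
    by (intro add_left_mono mult_right_mono mult_left_mono) auto
  also have "\<dots> = 3 * fact (m + 1)" by (simp add: algebra_simps)
  finally show ?thesis .
qed

lemma aseq_bound: "real (aseq n) \<le> 3 * real n * fact n"
proof (induction n rule: less_induct)
  case (less n)
  show ?case
  proof (cases "n \<le> 4")
    case True then show ?thesis by (rule aseq_small)
  next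
    case False
    then obtain m where m: "n = Suc m" "m \<ge> 4" by (cases n) auto
    have IH: "real (aseq (Suc m - k)) \<le> 3 * real (Suc m - k) * fact (Suc m - k)" if k: "k \<in> {1..m}" for k
    proof -
      have lt: "Suc m - k < n" using k m by auto
      show ?thesis by (rule less.IH[OF lt])
    qed
    have "real (aseq n) = real (Suc m) * fact (Suc m) + (\<Sum>k\<in>{1..m}. fact k * real (aseq (Suc m - k)))"
      unfolding m by (simp add: of_nat_sum algebra_simps)
    also have "\<dots> \<le> real (Suc m) * fact (Suc m) + (\<Sum>k\<in>{1..m}. fact k * (3 * fact (m + 2 - k)))"
    proof (intro add_left_mono sum_mono mult_left_mono)
      fix k assume k: "k \<in> {1..m}"
      have "real (aseq (Suc m - k)) \<le> 3 * real (Suc m - k) * fact (Suc m - k)" by (rule IH[OF k])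
      also have "\<dots> \<le> 3 * fact (m + 2 - k)"
      proof -
        have e: "m + 2 - k = Suc (Suc m - k)" using k by auto
        have "real (Suc m - k) * fact (Suc m - k) \<le> real (Suc (Suc m - k)) * fact (Suc m - k)"
          by (intro mult_right_mono) auto
        then show ?thesis unfolding e by simp
      qed
      finally show "real (aseq (Suc m - k)) \<le> 3 * fact (m + 2 - k)" .
    qed auto
    also have "\<dots> = real (Suc m) * fact (Suc m) + 3 * (\<Sum>k\<in>{1..m}. fact k * fact (m + 2 - k))"
      by (simp add: sum_distrib_left algebra_simps)
    also have "\<dots> \<le> real (Suc m) * fact (Suc m) + 3 * (3 * fact (m + 1))"
      using fact_sum_bound[OF m(2)] by linarith
    also have "\<dots> \<le> 3 * real n * fact n"
    proof -
      have h9: "(9::real) \<le> 2 * real (Suc m)" using m(2) by simp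
      have "9 * fact (Suc m) \<le> 2 * real (Suc m) * (fact (Suc m)::real)" by (rule mult_right_mono[OF h9]) simp
      moreover have "fact (m + 1) = (fact (Suc m) :: real)" by simp
      moreover have "3 * real (Suc m) * (fact (Suc m)::real) = real (Suc m) * fact (Suc m) + 2 * real (Suc m) * fact (Suc m)"
        by (simp add: algebra_simps)
      ultimately show ?thesis unfolding m by linarith
    qed
    finally show ?thesis .
  qed
qed

lemma log_fps_deriv:
  fixes G :: "real fps" assumes G0: "fps_nth G 0 = 0"
  shows "fps_deriv (fps_ln 1 oo G) * (1 + G) = fps_deriv G"
proof -
  have a: "fps_deriv (fps_ln 1 oo G) = (fps_deriv (fps_ln 1) oo G) * fps_deriv G"
    by (rule fps_compose_deriv[OF G0])
  have b: "fps_deriv (fps_ln (1::real)) = inverse (1 + fps_X)" by (simp add: fps_ln_deriv)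
  have c: "inverse (1 + fps_X) oo G = inverse ((1 + fps_X) oo G)"
    by (rule fps_inverse_compose[OF G0]) simp
  have d: "(1 + fps_X) oo G = 1 + G" using G0 by (simp add: fps_compose_add_distrib)
  have e: "inverse (1 + G) * (1 + G) = 1" using G0 by (intro inverse_mult_eq_1) simp
  show ?thesis unfolding a b c d using e by (simp add: algebra_simps)
qed

lemma log_fps_rec:
  fixes G :: "real fps" assumes G0: "fps_nth G 0 = 0"
  shows "real (Suc m) * fps_nth (fps_ln 1 oo G) (Suc m) =
     real (Suc m) * fps_nth G (Suc m) - (\<Sum>k\<in>{1..m}. real k * fps_nth (fps_ln 1 oo G) k * fps_nth G (Suc m - k))"
proof -
  define L where "L = fps_ln 1 oo G"
  have e0: "fps_nth (fps_deriv L * (1 + G)) m = fps_nth (fps_deriv G) m" using log_fps_deriv[OF G0] by (simp add: L_def)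
  have e1: "fps_nth (fps_deriv L * (1 + G)) m = fps_nth (fps_deriv L) m + fps_nth (fps_deriv L * G) m"
    by (simp add: distrib_left)
  have e2: "fps_nth (fps_deriv L * G) m = (\<Sum>i = 0..m. real (Suc i) * fps_nth L (Suc i) * fps_nth G (m - i))"
    by (simp add: fps_mult_nth fps_deriv_nth)
  have e3: "fps_nth (fps_deriv L) m = real (Suc m) * fps_nth L (Suc m)" by (simp add: fps_deriv_nth)
  have e4: "fps_nth (fps_deriv G) m = real (Suc m) * fps_nth G (Suc m)" by (simp add: fps_deriv_nth)
  have eq: "real (Suc m) * fps_nth L (Suc m) + (\<Sum>i = 0..m. real (Suc i) * fps_nth L (Suc i) * fps_nth G (m - i)) = real (Suc m) * fps_nth G (Suc m)"
    using e0 e1 e2 e3 e4 by linarith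
  have "(\<Sum>i = 0..m. real (Suc i) * fps_nth L (Suc i) * fps_nth G (m - i)) = (\<Sum>k\<in>{Suc 0..Suc m}. real k * fps_nth L k * fps_nth G (Suc m - k))"
    by (subst sum.shift_bounds_cl_Suc_ivl) simp
  also have "\<dots> = (\<Sum>k\<in>{1..m}. real k * fps_nth L k * fps_nth G (Suc m - k))"
    using G0 by (subst sum.cl_ivl_Suc) auto
  finally show ?thesis using eq unfolding L_def by linarith
qed


definition vpoly :: "nat \<Rightarrow> real \<Rightarrow> real poly" where
  "vpoly N y = (\<Sum>n\<in>{1..N}. monom (poly (Ppoly (n - 1)) y) n)"
definition bpoly :: "nat \<Rightarrow> real \<Rightarrow> real poly" where
  "bpoly N y = (\<Sum>n\<in>{1..N}. monom (fact n * y ^ n) n)"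

lemma coeff_vpoly: "coeff (vpoly N y) n = (if 1 \<le> n \<and> n \<le> N then poly (Ppoly (n - 1)) y else 0)"
  by (simp add: vpoly_def coeff_sum coeff_monom)

lemma coeff_bpoly: "coeff (bpoly N y) n = (if 1 \<le> n \<and> n \<le> N then fact n * y ^ n else 0)"
  by (simp add: bpoly_def coeff_sum coeff_monom)

definition Aval :: "real \<Rightarrow> nat \<Rightarrow> real" where
  "Aval y n = poly (Ppoly n) y - (real n - 1) * poly (Ppoly (n - 1)) y + poly (pderiv (Ppoly (n - 1))) y"

lemma poly_Ppoly_Suc:
  "poly (Ppoly (Suc m)) y = real (Suc m) * poly (Ppoly m) y - poly (pderiv (Ppoly m)) y
     - 1 / real (Suc m) * (\<Sum>k\<in>{1..m}. real k * Aval y k * poly (Ppoly (m - k)) y)"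
proof -
  have "(\<Sum>k\<in>{1..m}. real k * ((real k - 1) * poly (Ppoly (k - 1)) y - poly (Ppoly k) y - poly (pderiv (Ppoly (k - 1))) y) * poly (Ppoly (m - k)) y)
      = (\<Sum>k\<in>{1..m}. - (real k * Aval y k * poly (Ppoly (m - k)) y))"
    by (rule sum.cong) (simp_all add: Aval_def algebra_simps)
  also have "\<dots> = - (\<Sum>k\<in>{1..m}. real k * Aval y k * poly (Ppoly (m - k)) y)"
    by (rule sum_negf)
  finally have e: "(\<Sum>k\<in>{1..m}. real k * ((real k - 1) * poly (Ppoly (k - 1)) y - poly (Ppoly k) y - poly (pderiv (Ppoly (k - 1))) y) * poly (Ppoly (m - k)) y)
      = - (\<Sum>k\<in>{1..m}. real k * Aval y k * poly (Ppoly (m - k)) y)" .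
  have p: "poly (Ppoly (Suc m)) y = real (Suc m) * poly (Ppoly m) y - poly (pderiv (Ppoly m)) y
     + 1 / real (Suc m) * (\<Sum>k\<in>{1..m}. real k * ((real k - 1) * poly (Ppoly (k - 1)) y - poly (Ppoly k) y - poly (pderiv (Ppoly (k - 1))) y) * poly (Ppoly (m - k)) y)"
    by (simp only: Ppoly.simps poly_add poly_diff poly_smult poly_sum poly_mult)
  show ?thesis unfolding p e by simp
qed

lemma L_id:
  assumes "1 \<le> n" "n \<le> N"
  shows "fps_nth (fps_ln 1 oo fps_of_poly (vpoly N y)) n = Aval y n"
  using assms
proof (induction n rule: less_induct)
  case (less n)
  define V where "V = fps_of_poly (vpoly N y)"
  define L where "L = fps_ln 1 oo V"
  have V0: "fps_nth V 0 = 0" by (simp add: V_def coeff_vpoly)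
  obtain m where m: "n = Suc m" using less.prems by (cases n) auto
  have IH: "fps_nth L k = Aval y k" if "k \<in> {1..m}" for k
    using less.IH[of k] that less.prems m by (auto simp: L_def V_def)
  have Vk: "fps_nth V (Suc m - k) = poly (Ppoly (m - k)) y" if "k \<in> {1..m}" for k
    using that less.prems m by (auto simp: V_def coeff_vpoly Suc_diff_le)
  have Vm: "fps_nth V (Suc m) = poly (Ppoly m) y" using less.prems m by (simp add: V_def coeff_vpoly)
  have rec: "real (Suc m) * fps_nth L (Suc m) = real (Suc m) * fps_nth V (Suc m) - (\<Sum>k\<in>{1..m}. real k * fps_nth L k * fps_nth V (Suc m - k))"
    unfolding L_def by (rule log_fps_rec[OF V0])
  have S: "(\<Sum>k\<in>{1..m}. real k * fps_nth L k * fps_nth V (Suc m - k)) = (\<Sum>k\<in>{1..m}. real k * Aval y k * poly (Ppoly (m - k)) y)"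
    by (rule sum.cong) (auto simp: IH Vk)
  have "fps_nth L (Suc m) = poly (Ppoly m) y - 1 / real (Suc m) * (\<Sum>k\<in>{1..m}. real k * Aval y k * poly (Ppoly (m - k)) y)"
    using rec unfolding S Vm by (simp add: field_simps)
  also have "\<dots> = Aval y (Suc m)"
    unfolding Aval_def poly_Ppoly_Suc by (simp add: algebra_simps)
  finally show ?case unfolding m L_def V_def .
qed

lemma M_id:
  assumes "1 \<le> n" "n \<le> N"
  shows "fps_nth (- (fps_ln 1 oo - fps_of_poly (bpoly N y))) n = real (aseq n) * y ^ n / real n"
  using assms
proof (induction n rule: less_induct)
  case (less n)
  define B where "B = fps_of_poly (bpoly N y)"
  define M where "M = - (fps_ln 1 oo - B)"
  have B0: "fps_nth (-B) 0 = 0" by (simp add: B_def coeff_bpoly)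
  obtain m where m: "n = Suc m" using less.prems by (cases n) auto
  have IH: "real k * fps_nth M k = real (aseq k) * y ^ k" if k: "k \<in> {1..m}" for k
  proof -
    have "fps_nth M k = real (aseq k) * y ^ k / real k"
      using less.IH[of k] k less.prems m unfolding M_def B_def by auto
    then show ?thesis using k by simp
  qed
  have Bk: "fps_nth B (Suc m - k) = fact (Suc m - k) * y ^ (Suc m - k)" if "k \<in> {1..m}" for k
    using that less.prems m by (auto simp: B_def coeff_bpoly)
  have Bm: "fps_nth B (Suc m) = fact (Suc m) * y ^ Suc m" using less.prems m by (simp add: B_def coeff_bpoly)
  have rec: "real (Suc m) * fps_nth (fps_ln 1 oo - B) (Suc m) = real (Suc m) * fps_nth (-B) (Suc m)
      - (\<Sum>k\<in>{1..m}. real k * fps_nth (fps_ln 1 oo - B) k * fps_nth (-B) (Suc m - k))"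
    by (rule log_fps_rec[OF B0])
  have rec2: "real (Suc m) * fps_nth M (Suc m) = real (Suc m) * fps_nth B (Suc m)
      + (\<Sum>k\<in>{1..m}. real k * fps_nth M k * fps_nth B (Suc m - k))"
  proof -
    have "(\<Sum>k\<in>{1..m}. real k * fps_nth (fps_ln 1 oo - B) k * fps_nth (-B) (Suc m - k))
        = (\<Sum>k\<in>{1..m}. real k * fps_nth M k * fps_nth B (Suc m - k))"
      by (rule sum.cong) (simp_all add: M_def)
    then show ?thesis using rec by (simp add: M_def)
  qed
  have S: "(\<Sum>k\<in>{1..m}. real k * fps_nth M k * fps_nth B (Suc m - k))
      = (\<Sum>k\<in>{1..m}. real (aseq k) * fact (Suc m - k) * y ^ Suc m)"
  proof (rule sum.cong)
    fix k assume k: "k \<in> {1..m}"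
    have e: "y ^ Suc m = y ^ k * y ^ (Suc m - k)" using k by (subst power_add[symmetric]) simp
    have "real k * fps_nth M k * fps_nth B (Suc m - k) = (real (aseq k) * y ^ k) * (fact (Suc m - k) * y ^ (Suc m - k))"
      using IH[OF k] Bk[OF k] by simp
    also have "\<dots> = real (aseq k) * fact (Suc m - k) * (y ^ k * y ^ (Suc m - k))" by (simp only: ac_simps)
    also have "\<dots> = real (aseq k) * fact (Suc m - k) * y ^ Suc m" by (simp only: e)
    finally show "real k * fps_nth M k * fps_nth B (Suc m - k) = real (aseq k) * fact (Suc m - k) * y ^ Suc m" .
  qed simp
  have rev: "(\<Sum>k\<in>{1..m}. fact k * real (aseq (Suc m - k))) = (\<Sum>k\<in>{1..m}. real (aseq k) * fact (Suc m - k))"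
  proof -
    have "(\<Sum>k\<in>{1..m}. fact k * real (aseq (Suc m - k))) = (\<Sum>i\<in>{1..m}. fact (m + 1 - i) * real (aseq (Suc m - (m + 1 - i))))"
      by (rule sum.atLeastAtMost_rev)
    also have "\<dots> = (\<Sum>k\<in>{1..m}. real (aseq k) * fact (Suc m - k))"
      by (rule sum.cong) auto
    finally show ?thesis .
  qed
  have A: "real (aseq (Suc m)) = real (Suc m) * fact (Suc m) + (\<Sum>k\<in>{1..m}. fact k * real (aseq (Suc m - k)))"
    by (simp only: aseq.simps of_nat_add of_nat_mult of_nat_sum of_nat_fact)
  have "real (Suc m) * fps_nth M (Suc m) = real (Suc m) * (fact (Suc m) * y ^ Suc m) + (\<Sum>k\<in>{1..m}. real (aseq k) * fact (Suc m - k) * y ^ Suc m)"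
    using rec2 unfolding S Bm .
  also have "\<dots> = (real (Suc m) * fact (Suc m) + (\<Sum>k\<in>{1..m}. real (aseq k) * fact (Suc m - k))) * y ^ Suc m"
    by (simp only: distrib_right mult.assoc sum_distrib_right)
  also have "\<dots> = real (aseq (Suc m)) * y ^ Suc m" unfolding A rev ..
  finally have "real (Suc m) * fps_nth M (Suc m) = real (aseq (Suc m)) * y ^ Suc m" .
  then have "fps_nth M (Suc m) = real (aseq (Suc m)) * y ^ Suc m / real (Suc m)"
    by (simp add: eq_divide_eq mult.commute)
  then show ?case unfolding m M_def B_def .
qed


definition lo :: "nat \<Rightarrow> real poly \<Rightarrow> real \<Rightarrow> real" where
  "lo N p u = (\<Sum>n\<le>N. coeff p n * u ^ n)"

lemma hi_maj:
  assumes "maj p q" "u \<ge> 0"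
  shows "\<bar>poly p u - lo N p u\<bar> \<le> poly q u - lo N q u"
proof -
  define D' where "D' = max (degree p) (degree q)"
  have sp: "poly p u = lo N p u + (\<Sum>n\<in>{Suc N..N + D'}. coeff p n * u ^ n)"
    unfolding lo_def by (subst poly_sum_D[of p "N + D'"]) (auto simp: D'_def sum_up_index_split)
  have sq: "poly q u = lo N q u + (\<Sum>n\<in>{Suc N..N + D'}. coeff q n * u ^ n)"
    unfolding lo_def by (subst poly_sum_D[of q "N + D'"]) (auto simp: D'_def sum_up_index_split)
  have "\<bar>\<Sum>n\<in>{Suc N..N + D'}. coeff p n * u ^ n\<bar> \<le> (\<Sum>n\<in>{Suc N..N + D'}. \<bar>coeff p n * u ^ n\<bar>)"
    by (rule sum_abs)
  also have "\<dots> \<le> (\<Sum>n\<in>{Suc N..N + D'}. coeff q n * u ^ n)"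
    using assms unfolding maj_def by (intro sum_mono) (auto simp: abs_mult intro: mult_right_mono)
  finally show ?thesis using sp sq by simp
qed

lemma coeff_pow_zero:
  fixes p :: "real poly"
  assumes "coeff p 0 = 0" "n < k" shows "coeff (p ^ k) n = 0"
proof -
  have "coeff (p ^ k) n = fps_nth (fps_of_poly p ^ k) n" by (simp add: fps_of_poly_power[symmetric])
  also have "\<dots> = 0" using startsby_zero_power_prefix[of "fps_of_poly p" k] assms by simp
  finally show ?thesis .
qed

lemma lo_zero: "coeff p 0 = 0 \<Longrightarrow> N < k \<Longrightarrow> lo N (p ^ k) u = 0"
  unfolding lo_def by (intro sum.neutral) (auto simp: coeff_pow_zero)

lemma lo_swap:
  assumes "coeff p 0 = 0"
  shows "(\<Sum>k\<le>N. c k * lo N (p ^ k) u) = (\<Sum>n\<le>N. (\<Sum>i=0..n. c i * coeff (p ^ i) n) * u ^ n)"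
proof -
  have "(\<Sum>k\<le>N. c k * lo N (p ^ k) u) = (\<Sum>k\<le>N. \<Sum>n\<le>N. c k * coeff (p ^ k) n * u ^ n)"
    unfolding lo_def by (simp add: sum_distrib_left mult.assoc)
  also have "\<dots> = (\<Sum>n\<le>N. \<Sum>k\<le>N. c k * coeff (p ^ k) n * u ^ n)" by (rule sum.swap)
  also have "\<dots> = (\<Sum>n\<le>N. (\<Sum>i=0..n. c i * coeff (p ^ i) n) * u ^ n)"
  proof (rule sum.cong)
    fix n assume n: "n \<in> {..N}"
    have "(\<Sum>k\<le>N. c k * coeff (p ^ k) n * u ^ n) = (\<Sum>k\<in>{0..n}. c k * coeff (p ^ k) n * u ^ n)"
      by (rule sum.mono_neutral_right) (use n assms in \<open>auto simp: coeff_pow_zero\<close>)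
    then show "(\<Sum>k\<le>N. c k * coeff (p ^ k) n * u ^ n) = (\<Sum>i=0..n. c i * coeff (p ^ i) n) * u ^ n"
      by (simp add: sum_distrib_right)
  qed simp
  finally show ?thesis .
qed

lemma neg1_sq: "(-1::real) ^ j * (-1) ^ j = 1"
  by (induction j) simp_all

lemma ln_coeff_neg: "fps_nth (fps_ln (1::real)) i * (-1) ^ i = - (1 / real i)"
proof (cases i)
  case 0 then show ?thesis by simp
next
  case (Suc j)
  have "fps_nth (fps_ln (1::real)) i * (-1) ^ i = - (((-1) ^ j * (-1) ^ j) / real (Suc j))"
    using Suc by (simp add: fps_ln_nth)
  then show ?thesis using Suc by (simp only: neg1_sq)
qed

lemma fps_neg_power_nth: "fps_nth ((- Q :: real fps) ^ i) n = (-1) ^ i * fps_nth (Q ^ i) n"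
proof (induction i arbitrary: n)
  case 0 then show ?case by simp
next
  case (Suc i)
  have e: "(- Q) ^ Suc i = - (Q * (- Q) ^ i)" by simp
  have "fps_nth (Q * (- Q) ^ i) n = (\<Sum>j = 0..n. fps_nth Q j * fps_nth ((- Q) ^ i) (n - j))"
    by (rule fps_mult_nth)
  also have "\<dots> = (\<Sum>j = 0..n. (-1) ^ i * (fps_nth Q j * fps_nth (Q ^ i) (n - j)))"
    by (rule sum.cong) (simp_all add: Suc.IH)
  also have "\<dots> = (-1) ^ i * (\<Sum>j = 0..n. fps_nth Q j * fps_nth (Q ^ i) (n - j))"
    by (rule sum_distrib_left[symmetric])
  also have "(\<Sum>j = 0..n. fps_nth Q j * fps_nth (Q ^ i) (n - j)) = fps_nth (Q * Q ^ i) n"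
    by (rule fps_mult_nth[symmetric])
  finally have "fps_nth (Q * (- Q) ^ i) n = (-1) ^ i * fps_nth (Q * Q ^ i) n" .
  then show ?case unfolding e by simp
qed

lemma log_tail:
  fixes p q :: "real poly"
  assumes mj: "maj p q" and p0: "coeff p 0 = 0" and q0: "coeff q 0 = 0" and u: "u \<ge> 0"
    and B1: "poly q u < 1"
  shows "\<bar>ln (1 + poly p u) - (\<Sum>n\<le>N. fps_nth (fps_ln 1 oo fps_of_poly p) n * u ^ n)\<bar>
         \<le> - ln (1 - poly q u) - (\<Sum>n\<le>N. fps_nth (- (fps_ln 1 oo - fps_of_poly q)) n * u ^ n)"
proof -
  define c :: "nat \<Rightarrow> real" where "c k = fps_nth (fps_ln 1) k" for k
  define d :: "nat \<Rightarrow> real" where "d k = 1 / real k" for k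
  define v where "v = poly p u"
  define b where "b = poly q u"
  have vb: "\<bar>v\<bar> \<le> b" unfolding v_def b_def by (rule maj_poly[OF mj u])
  have b0: "b \<ge> 0" using vb by simp
  have v1: "\<bar>v\<bar> < 1" using vb B1 b_def by simp
  have cabs: "\<bar>c k\<bar> = d k" for k
    by (cases k) (auto simp: c_def d_def fps_ln_nth abs_mult power_abs)
  have cser: "(\<lambda>k. c k * v ^ k) sums ln (1 + v)"
  proof -
    have "(\<lambda>k. - ((- v) ^ k) / real k) = (\<lambda>k. c k * v ^ k)"
    proof
      fix k show "- ((- v) ^ k) / real k = c k * v ^ k"
      proof (cases k)
        case 0 then show ?thesis by (simp add: c_def)
      next
        case (Suc j)
        have "(- v) ^ k = (-1) ^ k * v ^ k" by (rule power_minus)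
        then show ?thesis using Suc by (simp add: c_def fps_ln_nth)
      qed
    qed
    then show ?thesis using ln_series'[OF v1] by simp
  qed
  have dser: "(\<lambda>k. d k * b ^ k) sums (- ln (1 - b))"
  proof -
    have b1: "\<bar>- b\<bar> < 1" using B1 b0 b_def by simp
    have "(\<lambda>k. - (d k * b ^ k)) sums ln (1 + - b)"
    proof -
      have "(\<lambda>k. - ((- (- b)) ^ k) / real k) = (\<lambda>k. - (d k * b ^ k))" by (auto simp: d_def)
      then show ?thesis using ln_series'[OF b1] by simp
    qed
    then show ?thesis using sums_minus by fastforce
  qed
  define lv where "lv k = lo N (p ^ k) u" for k
  define lb where "lb k = lo N (q ^ k) u" for k
  have lvs: "(\<lambda>k. c k * lv k) sums (\<Sum>k\<le>N. c k * lv k)"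
    by (rule sums_finite) (auto simp: lv_def lo_zero[OF p0])
  have lbs: "(\<lambda>k. d k * lb k) sums (\<Sum>k\<le>N. d k * lb k)"
    by (rule sums_finite) (auto simp: lb_def lo_zero[OF q0])
  have hv: "(\<lambda>k. c k * (v ^ k - lv k)) sums (ln (1 + v) - (\<Sum>k\<le>N. c k * lv k))"
    using sums_diff[OF cser lvs] by (simp add: algebra_simps)
  have hb: "(\<lambda>k. d k * (b ^ k - lb k)) sums (- ln (1 - b) - (\<Sum>k\<le>N. d k * lb k))"
    using sums_diff[OF dser lbs] by (simp add: algebra_simps)
  have bnd: "\<bar>c k * (v ^ k - lv k)\<bar> \<le> d k * (b ^ k - lb k)" for k
  proof -
    have "\<bar>v ^ k - lv k\<bar> \<le> b ^ k - lb k"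
      using hi_maj[OF maj_power[OF mj] u, of k N] by (simp add: v_def b_def lv_def lb_def poly_power)
    then show ?thesis unfolding abs_mult cabs d_def by (intro mult_left_mono) auto
  qed
  have le1: "ln (1 + v) - (\<Sum>k\<le>N. c k * lv k) \<le> - ln (1 - b) - (\<Sum>k\<le>N. d k * lb k)"
    apply (rule sums_le[OF _ hv hb])
    subgoal for n using bnd[of n] unfolding abs_le_iff by linarith
    done
  have le2: "- (- ln (1 - b) - (\<Sum>k\<le>N. d k * lb k)) \<le> ln (1 + v) - (\<Sum>k\<le>N. c k * lv k)"
    apply (rule sums_le[OF _ sums_minus[OF hb] hv])
    subgoal for n using bnd[of n] unfolding abs_le_iff by linarith
    done
  have Sv: "(\<Sum>k\<le>N. c k * lv k) = (\<Sum>n\<le>N. fps_nth (fps_ln 1 oo fps_of_poly p) n * u ^ n)"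
    unfolding lv_def lo_swap[OF p0]
    by (rule sum.cong) (auto simp: fps_compose_nth c_def fps_of_poly_power[symmetric])
  have Sb: "(\<Sum>k\<le>N. d k * lb k) = (\<Sum>n\<le>N. fps_nth (- (fps_ln 1 oo - fps_of_poly q)) n * u ^ n)"
    unfolding lb_def lo_swap[OF q0]
  proof (rule sum.cong)
    fix n
    have "(\<Sum>i = 0..n. d i * coeff (q ^ i) n) = - (\<Sum>i = 0..n. fps_nth (fps_ln 1) i * fps_nth ((- fps_of_poly q) ^ i) n)"
      unfolding sum_negf[symmetric]
    proof (rule sum.cong)
      fix i
      have "fps_nth (fps_ln 1) i * fps_nth ((- fps_of_poly q) ^ i) n = (fps_nth (fps_ln 1) i * (-1) ^ i) * coeff (q ^ i) n"
        unfolding fps_neg_power_nth fps_of_poly_power[symmetric] fps_of_poly_nth by (simp only: ac_simps)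
      then show "d i * coeff (q ^ i) n = - (fps_nth (fps_ln 1) i * fps_nth ((- fps_of_poly q) ^ i) n)"
        unfolding ln_coeff_neg d_def by simp
    qed simp
    then show "(\<Sum>i = 0..n. d i * coeff (q ^ i) n) * u ^ n = fps_nth (- (fps_ln 1 oo - fps_of_poly q)) n * u ^ n"
      by (simp add: fps_compose_nth)
  qed simp
  show ?thesis using le1 le2 unfolding Sv Sb v_def b_def by (simp add: abs_le_iff)
qed


lemma xlnx_mono:
  fixes a b :: real
  assumes "exp 1 \<le> a" "a \<le> b"
  shows "a / ln a \<le> b / ln b"
proof (rule DERIV_nonneg_imp_nondecreasing[where f = "\<lambda>t. t / ln t"])
  show "a \<le> b" by (rule assms(2))
next
  fix x assume x: "a \<le> x" "x \<le> b"
  have x1: "exp 1 \<le> x" using assms x by simp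
  have xpos: "x > 0" using x1 by (meson exp_gt_zero less_le_trans)
  have lnx: "ln x \<ge> 1" using x1 xpos by (simp add: ln_ge_iff)
  have d: "((\<lambda>t. t / ln t) has_real_derivative (1 * ln x - x * inverse x) / (ln x * ln x)) (at x)"
    by (rule DERIV_divide) (use xpos lnx in \<open>auto intro!: DERIV_ln DERIV_ident\<close>)
  have "(1 * ln x - x * inverse x) / (ln x * ln x) \<ge> 0" using xpos lnx by simp
  then show "\<exists>y. ((\<lambda>t. t / ln t) has_real_derivative y) (at x) \<and> 0 \<le> y" using d by blast
qed

lemma deriv_W_x:
  assumes "x > 0"
  shows "deriv (\<lambda>t. W N t y) x = (\<Sum>n\<in>{1..N}. - real n * poly (Ppoly (n - 1)) y / x ^ Suc n)"
proof -
  have t: "((\<lambda>t. poly (Ppoly (n - 1)) y / t ^ n) has_real_derivative - real n * poly (Ppoly (n - 1)) y / x ^ Suc n) (at x)"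
    if n: "n \<in> {1..N}" for n
  proof -
    define c where "c = poly (Ppoly (n - 1)) y"
    have d: "((\<lambda>t. c / t ^ n) has_real_derivative (0 * x ^ n - c * (real n * x ^ (n - Suc 0))) / (x ^ n * x ^ n)) (at x)"
      by (rule DERIV_divide) (use assms in \<open>auto intro!: DERIV_pow\<close>)
    obtain k where k: "n = Suc k" using n by (cases n) auto
    have "(0 * x ^ n - c * (real n * x ^ (n - Suc 0))) / (x ^ n * x ^ n) = - real n * c / x ^ Suc n"
      using assms unfolding k by (simp add: field_simps)
    then show ?thesis using d unfolding c_def by simp
  qed
  have "((\<lambda>t. W N t y) has_real_derivative 0 + (\<Sum>n\<in>{1..N}. - real n * poly (Ppoly (n - 1)) y / x ^ Suc n)) (at x)"
    unfolding W_def by (intro DERIV_add DERIV_const DERIV_sum t) auto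
  then show ?thesis by (intro DERIV_imp_deriv) simp
qed

lemma deriv_W_y:
  shows "deriv (\<lambda>t. W N x t) y = (\<Sum>n\<in>{1..N}. poly (pderiv (Ppoly (n - 1))) y / x ^ n)"
proof -
  have "((\<lambda>t. W N x t) has_real_derivative 0 + (\<Sum>n\<in>{1..N}. poly (pderiv (Ppoly (n - 1))) y / x ^ n)) (at y)"
    unfolding W_def by (intro DERIV_add DERIV_const DERIV_sum DERIV_cdivide poly_DERIV)
  then show ?thesis by (intro DERIV_imp_deriv) simp
qed

lemma shift_sum:
  assumes "N \<ge> 1" "(x::real) > 0"
  shows "(\<Sum>n\<in>{1..N}. poly (Ppoly (n - 1)) y * x / x ^ n)
       = (y - 1) + (\<Sum>n\<in>{1..N}. poly (Ppoly n) y / x ^ n) - poly (Ppoly N) y / x ^ N"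
  using assms(1)
proof (induction N rule: dec_induct)
  case base then show ?case using assms by simp
next
  case (step N)
  have "(\<Sum>n\<in>{1..Suc N}. poly (Ppoly (n - 1)) y * x / x ^ n) =
      (\<Sum>n\<in>{1..N}. poly (Ppoly (n - 1)) y * x / x ^ n) + poly (Ppoly N) y * x / x ^ Suc N"
    by simp
  also have "poly (Ppoly N) y * x / x ^ Suc N = poly (Ppoly N) y / x ^ N" using assms by simp
  finally show ?case using step.IH by simp
qed

lemma W_poly: "W N x y = 1 + poly (vpoly N y) (1 / x)"
  by (simp add: W_def vpoly_def poly_sum poly_monom power_one_over)


lemma bracket_id:
  assumes N1: "N \<ge> 1" and xpos: "(x::real) > 0"
  shows "W N x y + x * W N x y + x * deriv (\<lambda>t. W N t y) x + deriv (\<lambda>t. W N x t) y - x - y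
       = (\<Sum>n\<in>{1..N}. Aval y n / x ^ n) - poly (Ppoly N) y / x ^ N"
proof -
  define w where "w n = poly (Ppoly (n - 1)) y" for n
  define w' where "w' n = poly (pderiv (Ppoly (n - 1))) y" for n
  define SW where "SW = (\<Sum>n\<in>{1..N}. w n / x ^ n)"
  define SP where "SP = (\<Sum>n\<in>{1..N}. poly (Ppoly n) y / x ^ n)"
  define SnW where "SnW = (\<Sum>n\<in>{1..N}. real n * w n / x ^ n)"
  define SdW where "SdW = (\<Sum>n\<in>{1..N}. w' n / x ^ n)"
  have hW: "W N x y = 1 + SW" by (simp add: W_def SW_def w_def)
  have hxW: "x * W N x y = x + ((y - 1) + SP - poly (Ppoly N) y / x ^ N)"
  proof -
    have "x * SW = (\<Sum>n\<in>{1..N}. poly (Ppoly (n - 1)) y * x / x ^ n)"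
      unfolding SW_def w_def sum_distrib_left by (rule sum.cong) simp_all
    then show ?thesis using shift_sum[OF N1 xpos, of y] unfolding hW SP_def by (simp add: distrib_left)
  qed
  have hWx: "x * deriv (\<lambda>t. W N t y) x = - SnW"
  proof -
    have "x * deriv (\<lambda>t. W N t y) x = (\<Sum>n\<in>{1..N}. x * (- real n * poly (Ppoly (n - 1)) y / x ^ Suc n))"
      unfolding deriv_W_x[OF xpos] sum_distrib_left ..
    also have "\<dots> = (\<Sum>n\<in>{1..N}. - (real n * w n / x ^ n))"
      by (rule sum.cong) (use xpos in \<open>simp_all add: w_def\<close>)
    also have "\<dots> = - SnW" unfolding SnW_def by (rule sum_negf)
    finally show ?thesis .
  qed
  have hWy: "deriv (\<lambda>t. W N x t) y = SdW" unfolding deriv_W_y SdW_def w'_def ..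
  have hA: "(\<Sum>n\<in>{1..N}. Aval y n / x ^ n) = SP - SnW + SW + SdW"
  proof -
    have "(\<Sum>n\<in>{1..N}. Aval y n / x ^ n) =
        (\<Sum>n\<in>{1..N}. poly (Ppoly n) y / x ^ n - real n * w n / x ^ n + w n / x ^ n + w' n / x ^ n)"
      by (rule sum.cong) (simp_all add: Aval_def w_def w'_def diff_divide_distrib add_divide_distrib algebra_simps)
    also have "\<dots> = SP - SnW + SW + SdW"
      by (simp add: SP_def SnW_def SW_def SdW_def sum.distrib sum_subtractf)
    finally show ?thesis .
  qed
  show ?thesis unfolding hxW hWx hWy hA using hW by simp
qed

lemma M_id':
  assumes "1 \<le> n" "n \<le> N"
  shows "fps_nth (fps_ln 1 oo - fps_of_poly (bpoly N y)) n = - (real (aseq n) * y ^ n / real n)"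
  using M_id[OF assms, of y] by simp

theorem proposition5p12:
  fixes N :: nat and c d \<beta> :: real
  assumes "N \<ge> 1"
    and "c_prop N c"
    and "d_prop N d"
    and "\<beta> \<ge> exp 1"
    and "\<beta> / ln \<beta> = max (exp 1) (max c d)"
  shows "\<forall>x::real. x \<ge> max \<beta> (max (4 * real (N + 1) / 3) (exp 2)) \<longrightarrow>
           (\<exists>\<theta>::real. \<bar>\<theta>\<bar> \<le> 1 \<and>
              W N x (ln x) + x * W N x (ln x)
              + x * deriv (\<lambda>t. W N t (ln x)) x
              + deriv (\<lambda>t. W N x t) (ln x)
              - x - ln x - ln (W N x (ln x))
              = \<theta> * (3 * fact (N + 1)) * (ln x) ^ N / x ^ N)"
proof (intro allI impI)
  fix x :: real
  assume hx: "x \<ge> max \<beta> (max (4 * real (N + 1) / 3) (exp 2))"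
  define y where "y = ln x"
  have xb: "x \<ge> \<beta>" and xe2: "x \<ge> exp 2" using hx by auto
  have e2: "exp 1 \<ge> (2::real)" using exp_ge_add_one_self[of "1::real"] by simp
  have xpos: "x > 0" using xe2 by (meson exp_gt_zero less_le_trans)
  have y2: "y \<ge> 2" unfolding y_def using xpos xe2 by (simp add: ln_ge_iff)
  have ypos: "y > 0" using y2 by simp
  define r where "r = x / y"
  have "\<beta> / ln \<beta> \<le> x / ln x" by (rule xlnx_mono[OF assms(4) xb])
  then have r_ge: "r \<ge> max (exp 1) (max c d)" unfolding r_def y_def using assms(5) by simp
  then have rc: "r \<ge> c" and rd: "r \<ge> d" and r2: "r \<ge> 2" using e2 by auto
  have rpos: "r > 0" using r2 by simp
  define u where "u = 1 / x"
  have u0: "u \<ge> 0" using xpos by (simp add: u_def)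
  define vp where "vp = vpoly N y"
  define bp where "bp = bpoly N y"
  have mj: "maj vp bp"
    unfolding maj_def vp_def bp_def coeff_vpoly coeff_bpoly
    using P_bound_maj[OF _ y2] by auto
  have p0: "coeff vp 0 = 0" by (simp add: vp_def coeff_vpoly)
  have q0: "coeff bp 0 = 0" by (simp add: bp_def coeff_bpoly)
  define Br where "Br = (\<Sum>n\<in>{1..N}. fact n / r ^ n)"
  have Bv: "poly bp u = Br"
    unfolding bp_def bpoly_def Br_def poly_sum poly_monom
    by (rule sum.cong) (use xpos ypos in \<open>simp_all add: u_def r_def power_divide\<close>)
  have Br1: "1 - Br > 0"
  proof -
    have cp: "\<forall>x::real. x \<ge> c \<longrightarrow> x * (1 - (\<Sum>n\<in>{1..N}. fact n / x ^ n)) \<ge> 1"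
      using assms(2) unfolding c_prop_def by (rule conjunct2)
    have h: "r * (1 - Br) \<ge> 1" unfolding Br_def using cp rc by simp
    show ?thesis
    proof (rule ccontr)
      assume "\<not> 1 - Br > 0"
      then have "1 - Br \<le> 0" by simp
      then have "r * (1 - Br) \<le> 0" using rpos by (simp add: mult_nonneg_nonpos)
      then show False using h by simp
    qed
  qed
  have Bv1: "poly bp u < 1" using Bv Br1 by simp
  have tail: "\<bar>ln (1 + poly vp u) - (\<Sum>n\<le>N. fps_nth (fps_ln 1 oo fps_of_poly vp) n * u ^ n)\<bar>
         \<le> - ln (1 - poly bp u) - (\<Sum>n\<le>N. fps_nth (- (fps_ln 1 oo - fps_of_poly bp)) n * u ^ n)"
    by (rule log_tail[OF mj p0 q0 u0 Bv1])
  have atm: "{..N} = insert 0 {1..N}" by auto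
  have S0: "(\<Sum>n\<le>N. fps_nth (fps_ln 1 oo fps_of_poly vp) n * u ^ n) = (\<Sum>n\<in>{1..N}. Aval y n / x ^ n)"
    unfolding atm
    by (subst sum.insert) (auto intro!: sum.cong simp: vp_def L_id u_def power_one_over)
  define SA where "SA = (\<Sum>n\<in>{1..N}. real (aseq n) / real n / r ^ n)"
  have SB: "(\<Sum>n\<le>N. fps_nth (- (fps_ln 1 oo - fps_of_poly bp)) n * u ^ n) = SA"
    unfolding atm SA_def
    by (subst sum.insert) (use xpos ypos in \<open>auto intro!: sum.cong simp: bp_def M_id' u_def r_def power_divide\<close>)
  define Ka where "Ka = real (aseq (N + 1)) / real (N + 1) / r ^ (N + 1)"
  have dtail: "- ln (1 - Br) - SA \<le> Ka"
  proof -
    define z where "z = complex_of_real r"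
    have nz: "norm z \<ge> d" using rd rpos by (simp add: z_def)
    obtain \<theta> :: complex where th: "norm \<theta> \<le> 1"
      and eq: "Ln (inverse (1 - (\<Sum>n\<in>{1..N}. fact n / z ^ n)))
           = (\<Sum>n\<in>{1..N}. of_nat (aseq n) / of_nat n / z ^ n)
             + \<theta> * of_nat (aseq (N + 1)) / of_nat (N + 1) / z ^ (N + 1)"
      using assms(3) nz unfolding d_prop_def by blast
    have e1: "(\<Sum>n\<in>{1..N}. fact n / z ^ n) = complex_of_real Br"
      by (simp add: Br_def z_def of_real_sum)
    have e2: "(\<Sum>n\<in>{1..N}. of_nat (aseq n) / of_nat n / z ^ n) = complex_of_real SA"
      by (simp add: SA_def z_def of_real_sum)
    have e3: "\<theta> * of_nat (aseq (N + 1)) / of_nat (N + 1) / z ^ (N + 1) = \<theta> * complex_of_real Ka"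
      by (simp add: Ka_def z_def)
    have e4: "Ln (inverse (1 - complex_of_real Br)) = complex_of_real (ln (inverse (1 - Br)))"
    proof -
      have a: "inverse (1 - complex_of_real Br) = complex_of_real (inverse (1 - Br))" by simp
      have b: "Ln (complex_of_real (inverse (1 - Br))) = complex_of_real (ln (inverse (1 - Br)))"
        by (rule Ln_of_real) (use Br1 in simp)
      show ?thesis unfolding a b ..
    qed
    have "complex_of_real (ln (inverse (1 - Br))) = complex_of_real SA + \<theta> * complex_of_real Ka"
      using eq unfolding e1 e2 e3 e4 .
    then have "Re (complex_of_real (ln (inverse (1 - Br)))) = Re (complex_of_real SA + \<theta> * complex_of_real Ka)"
      by simp
    then have "ln (inverse (1 - Br)) = SA + Re \<theta> * Ka" by simp
    moreover have "Re \<theta> \<le> 1" using abs_Re_le_cmod[of \<theta>] th by simp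
    moreover have "Ka \<ge> 0" unfolding Ka_def using rpos by (intro divide_nonneg_nonneg) (auto simp del: aseq.simps)
    ultimately have "ln (inverse (1 - Br)) \<le> SA + Ka"
      using mult_right_mono[of "Re \<theta>" 1 Ka] by simp
    then show ?thesis by (simp add: ln_inverse)
  qed
  have Wv: "W N x y = 1 + poly vp u" by (simp add: W_poly vp_def u_def)
  define E where "E = W N x y + x * W N x y + x * deriv (\<lambda>t. W N t y) x + deriv (\<lambda>t. W N x t) y - x - y - ln (W N x y)"
  have Eeq: "E = - (poly (Ppoly N) y / x ^ N) - (ln (1 + poly vp u) - (\<Sum>n\<in>{1..N}. Aval y n / x ^ n))"
  proof -
    have "E = (\<Sum>n\<in>{1..N}. Aval y n / x ^ n) - poly (Ppoly N) y / x ^ N - ln (W N x y)"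
      unfolding E_def by (subst bracket_id[OF assms(1) xpos, symmetric]) (rule refl)
    then show ?thesis unfolding Wv by simp
  qed
  have T: "\<bar>ln (1 + poly vp u) - (\<Sum>n\<in>{1..N}. Aval y n / x ^ n)\<bar> \<le> Ka"
    using tail dtail unfolding S0 SB Bv by simp
  define F where "F = fact (N + 1) * (y ^ N / x ^ N)"
  have F0: "F > 0" using xpos ypos by (simp add: F_def)
  have yx: "y ^ N / x ^ N = 1 / r ^ N" using xpos ypos by (simp add: r_def power_divide)
  have PN: "\<bar>poly (Ppoly N) y / x ^ N\<bar> \<le> 9/8 * F"
  proof -
    have "\<bar>poly (Ppoly N) y / x ^ N\<bar> = \<bar>poly (Ppoly N) y\<bar> / x ^ N" using xpos by (simp add: abs_divide)
    also have "\<dots> \<le> 9/8 * fact (N + 1) * y ^ N / x ^ N"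
      using P_bound[OF assms(1) y2] xpos by (intro divide_right_mono) auto
    finally show ?thesis by (simp add: F_def)
  qed
  have KaF: "Ka \<le> 3/2 * F"
  proof -
    have a: "real (aseq (N + 1)) / real (N + 1) \<le> 3 * fact (N + 1)"
      using aseq_bound[of "N+1"] by (simp add: field_simps)
    have "Ka \<le> 3 * fact (N + 1) / r ^ (N + 1)"
      unfolding Ka_def using a rpos by (intro divide_right_mono) auto
    also have "\<dots> = 3 * fact (N + 1) * (1 / r ^ N) * (1 / r)" by (simp add: field_simps)
    also have "\<dots> \<le> 3 * fact (N + 1) * (1 / r ^ N) * (1 / 2)"
      using r2 rpos by (intro mult_left_mono) (auto simp: field_simps)
    also have "\<dots> = 3/2 * F" unfolding F_def yx by simp
    finally show ?thesis .
  qed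
  have Ebound: "\<bar>E\<bar> \<le> 3 * F"
    using Eeq PN T KaF unfolding abs_le_iff by linarith
  define \<theta> where "\<theta> = E / (3 * F)"
  have th1: "\<bar>\<theta>\<bar> \<le> 1" using Ebound F0 by (simp add: \<theta>_def abs_divide divide_le_eq_1)
  have eA: "\<theta> * (3 * fact (N + 1)) * y ^ N / x ^ N = \<theta> * (3 * F)"
    unfolding F_def by (simp only: times_divide_eq_right mult.assoc)
  have eB: "\<theta> * (3 * F) = E" using F0 by (simp add: \<theta>_def field_simps)
  have "E = \<theta> * (3 * fact (N + 1)) * y ^ N / x ^ N" using eA eB by simp
  then show "\<exists>\<theta>::real. \<bar>\<theta>\<bar> \<le> 1 \<and>
              W N x (ln x) + x * W N x (ln x)
              + x * deriv (\<lambda>t. W N t (ln x)) x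
              + deriv (\<lambda>t. W N x t) (ln x)
              - x - ln x - ln (W N x (ln x))
              = \<theta> * (3 * fact (N + 1)) * (ln x) ^ N / x ^ N"
    using th1 unfolding E_def y_def by blast
qed


end
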